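(* Let $X$ be a non-empty finite set and $\mathcal{P}$ a partition of $X$ whose distinct block sizes are $l_1<l_2<\cdots<l_r$. Suppose $U\subseteq\Sigma(X,\mathcal{P})$ is such that $S(X,\mathcal{P})\cup U$ generates $\Sigma(X,\mathcal{P})$ as a semigroup, and let $i\in\{1,\ldots,r\}$ be such that either $i=1$ and $l_1\ne 1$, or $i\ge 2$ and $l_i-l_{i-1}\ge 2$. Then $\mathcal{C}_i\cap U\ne\emptyset$.
   Context: $T(X,\mathcal{P})$ is the semigroup (under composition) of maps $f:X\to X$ mapping each block of $\mathcal{P}$ into some block; $S(X,\mathcal{P})$ is its group of units (bijections in $T(X,\mathcal{P})$); $\Sigma(X,\mathcal{P})$ is the set of $f\in T(X,\mathcal{P})$ whose image intersects every block. For $i\le r$, $\mathcal{C}_i$ is the set of all $f\in\Sigma(X,\mathcal{P})$ such that $f$ maps each block into a block of the same size (possibly itself), there is one block of size $l_i$ whose image under $f$ has size $l_i-1$, and $f$ maps all other blocks injectively. *)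

theory Defs
  imports "HOL-Library.FuncSet" "HOL-Library.Disjoint_Sets"
begin

text \<open>Maps X \<rightarrow> X are represented as extensional functions (undefined outside X);
composition is compose X.\<close>

definition T_part :: "'a set \<Rightarrow> 'a set set \<Rightarrow> ('a \<Rightarrow> 'a) set" where
  "T_part X P = {f \<in> X \<rightarrow>\<^sub>E X. \<forall>B\<in>P. \<exists>C\<in>P. f ` B \<subseteq> C}"

definition S_part :: "'a set \<Rightarrow> 'a set set \<Rightarrow> ('a \<Rightarrow> 'a) set" where
  "S_part X P = {f \<in> T_part X P. bij_betw f X X}"

definition Sigma_part :: "'a set \<Rightarrow> 'a set set \<Rightarrow> ('a \<Rightarrow> 'a) set" where
  "Sigma_part X P = {f \<in> T_part X P. \<forall>B\<in>P. f ` X \<inter> B \<noteq> {}}"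

inductive_set gen_sgp :: "'a set \<Rightarrow> ('a \<Rightarrow> 'a) set \<Rightarrow> ('a \<Rightarrow> 'a) set"
  for X :: "'a set" and G :: "('a \<Rightarrow> 'a) set" where
  base: "g \<in> G \<Longrightarrow> g \<in> gen_sgp X G"
| comp: "f \<in> gen_sgp X G \<Longrightarrow> g \<in> gen_sgp X G \<Longrightarrow> compose X f g \<in> gen_sgp X G"

text \<open>Number r of distinct block sizes, and the i-th smallest block size l_i (1-based).\<close>
definition num_sizes :: "'a set set \<Rightarrow> nat" where
  "num_sizes P = card (card ` P)"

definition block_size :: "'a set set \<Rightarrow> nat \<Rightarrow> nat" where
  "block_size P i = sorted_list_of_set (card ` P) ! (i - 1)"

definition C_part :: "'a set \<Rightarrow> 'a set set \<Rightarrow> nat \<Rightarrow> ('a \<Rightarrow> 'a) set" where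
  "C_part X P i = {f \<in> Sigma_part X P.
      (\<forall>B\<in>P. \<exists>C\<in>P. f ` B \<subseteq> C \<and> card C = card B) \<and>
      (\<exists>B\<in>P. card B = block_size P i \<and> card (f ` B) = block_size P i - 1 \<and>
          (\<forall>B'\<in>P. B' \<noteq> B \<longrightarrow> inj_on f B'))}"

end

theory Submission
  imports Defs
begin

lemma part_blk: "partition_on X P \<Longrightarrow> x \<in> X \<Longrightarrow> \<exists>B\<in>P. x \<in> B"
  by (auto simp: partition_on_def)
lemma part_uniq: "partition_on X P \<Longrightarrow> B \<in> P \<Longrightarrow> C \<in> P \<Longrightarrow> x \<in> B \<Longrightarrow> x \<in> C \<Longrightarrow> B = C"
  by (meson disjointD disjoint_iff partition_onD2)
lemma part_sub: "partition_on X P \<Longrightarrow> B \<in> P \<Longrightarrow> B \<subseteq> X"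
  by (auto simp: partition_on_def)
lemma part_ne: "partition_on X P \<Longrightarrow> B \<in> P \<Longrightarrow> B \<noteq> {}"
  by (auto simp: partition_on_def)
lemma part_finP: "finite X \<Longrightarrow> partition_on X P \<Longrightarrow> finite P"
  by (meson finite_Pow_iff part_sub rev_finite_subset subsetI PowI)
lemma part_sum: "finite X \<Longrightarrow> partition_on X P \<Longrightarrow> card X = (\<Sum>B\<in>P. card B)"
  by (metis card_Union_disjoint partition_onD1 partition_onD2 part_sub finite_subset)

lemma pi_props:
  assumes fin: "finite X" and part: "partition_on X P" and g: "g \<in> Sigma_part X P"
    and pi: "\<forall>B\<in>P. pi B \<in> P \<and> g ` B \<subseteq> pi B"
  shows "inj_on pi P" "pi ` P = P"
proof -
  have finP: "finite P" using part_finP[OF fin part] .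
  show surj: "pi ` P = P"
  proof
    show "pi ` P \<subseteq> P" using pi by auto
    show "P \<subseteq> pi ` P"
    proof
      fix E assume E: "E \<in> P"
      then obtain y where y: "y \<in> g ` X" "y \<in> E" using g E unfolding Sigma_part_def by blast
      then obtain x where x: "x \<in> X" "y = g x" by auto
      then obtain B where B: "B \<in> P" "x \<in> B" using part_blk[OF part] by blast
      have "y \<in> pi B" using pi B x by auto
      hence "pi B = E" using part_uniq[OF part] pi B E y by blast
      thus "E \<in> pi ` P" using B by auto
    qed
  qed
  show "inj_on pi P"
    using eq_card_imp_inj_on[OF finP, of pi] surj by simp
qed

lemma pre_blk:
  assumes fin: "finite X" and part: "partition_on X P" and g: "g \<in> Sigma_part X P"
    and D: "D \<in> P" and E: "E \<in> P" and sub: "g ` D \<subseteq> E" and x: "x \<in> X" "g x \<in> E"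
  shows "x \<in> D"
proof -
  have "\<forall>B\<in>P. \<exists>C\<in>P. g ` B \<subseteq> C" using g by (auto simp: Sigma_part_def T_part_def)
  then obtain pi where pi: "\<forall>B\<in>P. pi B \<in> P \<and> g ` B \<subseteq> pi B" by metis
  have inj: "inj_on pi P" using pi_props[OF fin part g pi] by simp
  obtain B where B: "B \<in> P" "x \<in> B" using part_blk[OF part x(1)] by blast
  have "g x \<in> pi B" using pi B by auto
  hence e1: "pi B = E" using part_uniq[OF part] pi B E x by blast
  have "g ` D \<noteq> {}" using part_ne[OF part D] by auto
  hence e2: "pi D = E" using part_uniq[OF part] pi D E sub by blast
  have "B = D" using inj_onD[OF inj] e1 e2 B D by metis
  thus ?thesis using B by simp
qed

lemma key:
  assumes fin: "finite X" and part: "partition_on X P" and g: "g \<in> Sigma_part X P"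
    and rk: "card (g ` X) \<ge> card X - 1" and D0: "D0 \<in> P" and ninj: "\<not> inj_on g D0"
    and gap: "\<forall>E\<in>P. card E \<noteq> card D0 - 1"
  shows "(\<forall>B\<in>P. \<exists>C\<in>P. g ` B \<subseteq> C \<and> card C = card B) \<and> card (g ` D0) = card D0 - 1
      \<and> (\<forall>B'\<in>P. B' \<noteq> D0 \<longrightarrow> inj_on g B')"
proof -
  have finP: "finite P" using part_finP[OF fin part] .
  have finB: "\<And>B. B \<in> P \<Longrightarrow> finite B" using part_sub[OF part] fin finite_subset by blast
  have "\<forall>B\<in>P. \<exists>C\<in>P. g ` B \<subseteq> C" using g by (auto simp: Sigma_part_def T_part_def)
  then obtain pi where pi: "\<forall>B\<in>P. pi B \<in> P \<and> g ` B \<subseteq> pi B" by metis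
  have inj: "inj_on pi P" and surj: "pi ` P = P" using pi_props[OF fin part g pi] by auto
  have disj: "\<forall>B\<in>P. \<forall>B'\<in>P. B \<noteq> B' \<longrightarrow> g ` B \<inter> g ` B' = {}"
  proof (intro ballI impI)
    fix B B' assume B: "B \<in> P" and B': "B' \<in> P" and ne: "B \<noteq> B'"
    show "g ` B \<inter> g ` B' = {}"
    proof (rule ccontr)
      assume "g ` B \<inter> g ` B' \<noteq> {}"
      then obtain z where z: "z \<in> g ` B" "z \<in> g ` B'" by blast
      from z(2) obtain y where y0: "y \<in> B'" "z = g y" by (rule imageE) simp
      have y: "y \<in> B'" "g y \<in> g ` B" using y0 z(1) by auto
      have "y \<in> B"
        using pre_blk[OF fin part g B _ _ _ , of "pi B" y] pi B y part_sub[OF part B'] by auto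
      thus False using part_uniq[OF part B B'] y ne by auto
    qed
  qed
  have gX: "g ` X = (\<Union>B\<in>P. g ` B)" using partition_onD1[OF part] by auto
  have sumg: "card (g ` X) = (\<Sum>B\<in>P. card (g ` B))"
    unfolding gX by (rule card_UN_disjoint) (use finP finB disj in auto)
  have sumX: "card X = (\<Sum>B\<in>P. card B)" using part_sum[OF fin part] .
  have le': "\<And>B. B \<in> P \<Longrightarrow> card (g ` B) \<le> card B" using card_image_le finB by blast
  have lt: "card (g ` D0) < card D0"
    using le'[OF D0] ninj eq_card_imp_inj_on[OF finB[OF D0], of g] le_neq_implies_less by blast
  define s where "s = (\<Sum>B\<in>P-{D0}. card (g ` B))"
  define t where "t = (\<Sum>B\<in>P-{D0}. card B)"
  have s1: "card (g ` X) = card (g ` D0) + s" unfolding sumg s_def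
    using sum.remove[OF finP D0] by simp
  have t1: "card X = card D0 + t" unfolding sumX t_def
    using sum.remove[OF finP D0] by simp
  have st: "s \<le> t" unfolding s_def t_def by (rule sum_mono) (use le' in auto)
  have c0: "card (g ` D0) = card D0 - 1" and steq: "s = t" using rk s1 t1 st lt by linarith+
  have injo: "\<forall>B'\<in>P. B' \<noteq> D0 \<longrightarrow> inj_on g B'"
  proof (intro ballI impI)
    fix B assume B: "B \<in> P" "B \<noteq> D0"
    have "card (g ` B) = card B"
      using sum_mono_inv[OF steq[unfolded s_def t_def], of B] le' B finP by auto
    thus "inj_on g B" using eq_card_imp_inj_on finB B by blast
  qed
  have gepi: "card (g ` B) \<le> card (pi B)" if B: "B \<in> P" for B
  proof -
    have "pi B \<in> P" "g ` B \<subseteq> pi B" using pi B by auto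
    thus ?thesis using card_mono finB by blast
  qed
  have ge: "\<forall>B\<in>P. card B \<le> card (pi B)"
  proof
    fix B assume B: "B \<in> P"
    show "card B \<le> card (pi B)"
    proof (cases "B = D0")
      case True
      have "card (pi D0) \<ge> card D0 - 1" using gepi[OF D0] c0 by simp
      moreover have "card (pi D0) \<noteq> card D0 - 1" proof -
        have "pi D0 \<in> P" using pi D0 by auto
        thus ?thesis using gap by auto
      qed
      ultimately have "card D0 \<le> card (pi D0)" using lt by linarith
      thus ?thesis using True by simp
    next
      case False
      then show ?thesis using gepi[OF B] injo B by (simp add: card_image)
    qed
  qed
  have sumpi: "(\<Sum>B\<in>P. card (pi B)) = (\<Sum>B\<in>P. card B)"
    using sum.reindex[OF inj, of card] surj by simp
  have eqs: "\<forall>B\<in>P. card (pi B) = card B"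
    proof
    fix B assume B: "B \<in> P"
    show "card (pi B) = card B" using sum_mono_inv[OF sumpi[symmetric], of B] ge finP B by simp
  qed
  have "\<forall>B\<in>P. \<exists>C\<in>P. g ` B \<subseteq> C \<and> card C = card B"
  proof
    fix B assume B: "B \<in> P"
    show "\<exists>C\<in>P. g ` B \<subseteq> C \<and> card C = card B"
      by (rule bexI[of _ "pi B"]) (use pi eqs B in auto)
  qed
  then show ?thesis using c0 injo by simp
qed

lemma inv:
  assumes fin: "finite X" and part: "partition_on X P"
    and gen: "gen_sgp X (S_part X P \<union> U) = Sigma_part X P"
    and Ubase: "\<And>g D. g \<in> U \<Longrightarrow> card (g ` X) \<ge> card X - 1 \<Longrightarrow> D \<in> P \<Longrightarrow> card D = l \<Longrightarrow> inj_on g D"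
  shows "f \<in> gen_sgp X (S_part X P \<union> U) \<Longrightarrow> card (f ` X) \<ge> card X - 1 \<Longrightarrow> D \<in> P \<Longrightarrow> card D = l
     \<Longrightarrow> inj_on f D"
proof (induction arbitrary: D rule: gen_sgp.induct)
  case (base g)
  show ?case
  proof (cases "g \<in> U")
    case True
    then show ?thesis using Ubase base by blast
  next
    case False
    then have "bij_betw g X X" using base by (auto simp: S_part_def)
    then show ?thesis using inj_on_subset[OF bij_betw_imp_inj_on part_sub[OF part base(3)]] by blast
  qed
next
  case (comp f g)
  have fS: "f \<in> Sigma_part X P" and gS: "g \<in> Sigma_part X P" using comp gen by auto
  have gX: "g ` X \<subseteq> X" and fX: "f ` X \<subseteq> X" using fS gS
    by (auto simp: Sigma_part_def T_part_def PiE_def Pi_def)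
  have im: "compose X f g ` X = f ` g ` X" by (auto simp: compose_eq)
  have c1: "card (f ` g ` X) \<le> card (g ` X)" using card_image_le fin by blast
  have c2: "card (f ` g ` X) \<le> card (f ` X)" by (rule card_mono) (use fin gX in auto)
  have rg: "card (g ` X) \<ge> card X - 1" and rf: "card (f ` X) \<ge> card X - 1"
    using comp.prems(1) im c1 c2 by auto
  have DX: "D \<subseteq> X" using part_sub[OF part comp.prems(2)] .
  have ig: "inj_on g D" using comp.IH(2)[OF rg comp.prems(2,3)] .
  have "inj_on f (g ` D)"
  proof (cases "card (g ` X) = card X")
    case True
    have gXX: "g ` X = X" using card_subset_eq[OF fin gX True] .
    obtain E where E: "E \<in> P" "g ` D \<subseteq> E" using gS comp.prems(2) by (auto simp: Sigma_part_def T_part_def)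
    have "E \<subseteq> g ` D"
    proof
      fix e assume e: "e \<in> E"
      then have "e \<in> g ` X" using gXX part_sub[OF part E(1)] by auto
      then obtain x where x: "x \<in> X" "e = g x" by auto
      have "x \<in> D" using pre_blk[OF fin part gS comp.prems(2) E(1) E(2) x(1)] x e by simp
      thus "e \<in> g ` D" using x by auto
    qed
    hence EgD: "E = g ` D" using E by auto
    hence "card E = l" using card_image[OF ig] comp.prems(3) by simp
    hence "inj_on f E" using comp.IH(1)[OF rf E(1)] by simp
    thus ?thesis using EgD by simp
  next
    case False
    have "card (g ` X) \<le> card X" using card_image_le fin by blast
    hence "card (f ` g ` X) = card (g ` X)" using False c1 comp.prems(1) unfolding im by linarith
    hence "inj_on f (g ` X)" using eq_card_imp_inj_on[of "g ` X" f] fin by simp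
    thus ?thesis using inj_on_subset[OF _ image_mono[OF DX]] by blast
  qed
  hence i2: "inj_on (f \<circ> g) D" using comp_inj_on[OF ig] by blast
  have eq: "\<And>x. x \<in> D \<Longrightarrow> compose X f g x = (f \<circ> g) x" using DX by (auto simp: compose_eq)
  show ?case using inj_on_cong[of D "compose X f g" "f \<circ> g", OF eq] i2 by simp
qed


theorem lemma4p2:
  fixes X :: "'a set" and P :: "'a set set" and U :: "('a \<Rightarrow> 'a) set" and i :: nat
  assumes "finite X" and "X \<noteq> {}"
    and "partition_on X P"
    and "U \<subseteq> Sigma_part X P"
    and "gen_sgp X (S_part X P \<union> U) = Sigma_part X P"
    and "1 \<le> i" and "i \<le> num_sizes P"
    and "(i = 1 \<and> block_size P 1 \<noteq> 1) \<or>
         (i \<ge> 2 \<and> block_size P i - block_size P (i - 1) \<ge> 2)"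
  shows "C_part X P i \<inter> U \<noteq> {}"
proof
  assume noC: "C_part X P i \<inter> U = {}"
  note fin = assms(1) and part = assms(3) and gen = assms(5)
  define l where "l = block_size P i"
  define xs where "xs = sorted_list_of_set (card ` P)"
  have finP: "finite P" using part_finP[OF fin part] .
  have finB: "\<And>B. B \<in> P \<Longrightarrow> finite B" using part_sub[OF part] fin finite_subset by blast
  have setxs: "set xs = card ` P" unfolding xs_def using finP by simp
  have sxs: "sorted xs" unfolding xs_def by simp
  have lenxs: "length xs = num_sizes P" unfolding xs_def num_sizes_def using finP by simp
  have bs: "\<And>j. block_size P j = xs ! (j - 1)" unfolding block_size_def xs_def by simp
  have li: "l = xs ! (i - 1)" unfolding l_def bs ..
  have ilt: "i - 1 < length xs" using lenxs assms(6,7) by linarith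
  have "l \<in> card ` P" using li ilt setxs nth_mem by metis
  then obtain D0 where D0: "D0 \<in> P" "card D0 = l" by auto
  have "card D0 \<ge> 1" using part_ne[OF part D0(1)] finB[OF D0(1)] card_0_eq
    by (metis One_nat_def Suc_leI neq0_conv)
  hence l2: "l \<ge> 2" using assms(8) D0(2) unfolding l_def by auto
  have gap: "\<forall>E\<in>P. card E \<noteq> l - 1"
  proof (intro ballI notI)
    fix E assume E: "E \<in> P" and cE: "card E = l - 1"
    have "l - 1 \<in> set xs" using E cE setxs by (metis image_eqI)
    then obtain k where k: "k < length xs" "xs ! k = l - 1" by (auto simp: in_set_conv_nth)
    show False
    proof (cases "i - 1 \<le> k")
      case True
      have "xs ! (i - 1) \<le> xs ! k" using sorted_nth_mono[OF sxs True k(1)] .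
      thus False using k(2) li l2 by linarith
    next
      case False
      hence i2: "i \<ge> 2" by linarith
      have "k \<le> i - 2" using False by linarith
      moreover have "i - 2 < length xs" using ilt by linarith
      ultimately have "xs ! k \<le> xs ! (i - 2)" by (rule sorted_nth_mono[OF sxs])
      moreover have "block_size P (i - 1) = xs ! (i - 2)" using bs[of "i - 1"] by (simp add: numeral_2_eq_2)
      moreover have "block_size P i - block_size P (i - 1) \<ge> 2" using assms(8) i2 by auto
      ultimately show False using k(2) li l_def l2 by linarith
    qed
  qed
  have Ubase: "inj_on g D" if g: "g \<in> U" and rk: "card (g ` X) \<ge> card X - 1"
    and D: "D \<in> P" and cD: "card D = l" for g D
  proof (rule ccontr)
    assume ni: "\<not> inj_on g D"
    have gS: "g \<in> Sigma_part X P" using g assms(4) by auto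
    have K: "(\<forall>B\<in>P. \<exists>C\<in>P. g ` B \<subseteq> C \<and> card C = card B) \<and> card (g ` D) = card D - 1
      \<and> (\<forall>B'\<in>P. B' \<noteq> D \<longrightarrow> inj_on g B')"
      by (rule key[OF fin part gS rk D ni]) (use gap cD in auto)
    have "g \<in> C_part X P i" unfolding C_part_def
      using gS K D cD l_def by auto
    thus False using noC g by auto
  qed
  obtain x where x: "x \<in> D0" using part_ne[OF part D0(1)] by auto
  have "card (D0 - {x}) \<ge> 1" using D0 l2 x finB[OF D0(1)] by simp
  then obtain y where y: "y \<in> D0" "y \<noteq> x"
    by (metis Diff_iff One_nat_def card.empty ex_in_conv insertCI not_one_le_zero)
  have D0X: "D0 \<subseteq> X" using part_sub[OF part D0(1)] .
  define f0 where "f0 = (\<lambda>z\<in>X. if z = y then x else z)"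
  have f0X: "\<And>z. z \<in> X \<Longrightarrow> f0 z = (if z = y then x else z)" unfolding f0_def by simp
  have f0T: "f0 \<in> T_part X P" unfolding T_part_def
  proof (intro CollectI conjI ballI)
    show "f0 \<in> X \<rightarrow>\<^sub>E X" unfolding f0_def using x y D0X by auto
    fix B assume B: "B \<in> P"
    have "f0 ` B \<subseteq> B"
    proof
      fix w assume "w \<in> f0 ` B"
      then obtain z where z: "z \<in> B" "w = f0 z" by auto
      have zX: "z \<in> X" using z part_sub[OF part B] by auto
      show "w \<in> B"
      proof (cases "z = y")
        case True
        hence "B = D0" using part_uniq[OF part B D0(1)] z y by auto
        thus ?thesis using z True f0X zX x by auto
      next
        case False
        thus ?thesis using z f0X zX by auto
      qed
    qed
    thus "\<exists>C\<in>P. f0 ` B \<subseteq> C" using B by auto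
  qed
  have f0S: "f0 \<in> Sigma_part X P" unfolding Sigma_part_def
  proof (intro CollectI conjI ballI f0T)
    fix B assume B: "B \<in> P"
    obtain e where e: "e \<in> B" using part_ne[OF part B] by auto
    have eX: "e \<in> X" using e part_sub[OF part B] by auto
    show "f0 ` X \<inter> B \<noteq> {}"
    proof (cases "e = y")
      case True
      hence "B = D0" using part_uniq[OF part B D0(1)] e y by auto
      hence "f0 y \<in> f0 ` X \<inter> B" using y D0X f0X x by auto
      thus ?thesis by auto
    next
      case False
      hence "f0 e \<in> f0 ` X \<inter> B" using e eX f0X by auto
      thus ?thesis by auto
    qed
  qed
  have f0g: "f0 \<in> gen_sgp X (S_part X P \<union> U)" using gen f0S by simp
  have "X - {y} \<subseteq> f0 ` X"
  proof
    fix z assume z: "z \<in> X - {y}"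
    hence "f0 z = z" using f0X by auto
    thus "z \<in> f0 ` X" using z by (metis DiffD1 image_eqI)
  qed
  hence "card (X - {y}) \<le> card (f0 ` X)" using fin by (simp add: card_mono)
  hence rk: "card (f0 ` X) \<ge> card X - 1" using y D0X fin card_Diff_singleton[of y X] by auto
  have "inj_on f0 D0"
    by (rule inv[OF fin part gen Ubase f0g rk D0(1) D0(2)]) auto
  moreover have "f0 x = f0 y"
  proof -
    have "x \<in> X" "y \<in> X" using x y D0X by auto
    hence "f0 x = x" "f0 y = x" using f0X[of x] f0X[of y] y(2) by auto
    thus ?thesis by simp
  qed
  ultimately show False using x y inj_onD[of f0 D0 x y] by auto
qed

end
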